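(* Fix $\lambda>0$ and let $P_n = e^{-\lambda}\lambda^n/n!$. Let $\mathbb P$ be the set of compactly supported Borel probability measures on $\mathbb R$, equipped with the topology in which $\rho_n\to\rho$ iff $\int\phi\,d\rho_n\to\int\phi\,d\rho$ for every continuous compactly supported $\phi\colon\mathbb R\to\mathbb R$. For $k\geqslant 1$ let $h_k\colon\mathbb R\to\mathbb R$, $y\mapsto y/k$, and let $(h_k)_\star$ denote pushforward of measures. For $x\in\mathbb R$ define $\Sigma_x,\Sigma\colon\mathbb P\to\mathbb P$ by $$\Sigma_x(\rho) = \sum_{n=0}^\infty P_n\,(h_{n+1})_\star\big(\delta_x * \rho^{*n}\big),\qquad \Sigma(\rho) = \sum_{n=0}^\infty P_n\,(h_{n+1})_\star\big(\rho^{*(n+1)}\big),$$ where $*$ is convolution of measures, $\rho^{*n}$ the $n$-th convolution power and $\rho^{*0}=\delta_0$. Then for every $x\in\mathbb R$ the operators $\Sigma_x$ and $\Sigma$ are continuous on $\mathbb P$.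
   Context: $\delta_a$ is the Dirac measure at $a$; the series define measures via $\int\phi\,d\Sigma_x(\rho) = \sum_n P_n\int \phi(y/(n+1))\,d(\delta_x*\rho^{*n})(y)$, and similarly for $\Sigma$. *)

theory Defs
  imports "HOL-Probability.Probability"
begin

definition poisson_weight :: "real \<Rightarrow> nat \<Rightarrow> real" where
  "poisson_weight l n = exp (- l) * l ^ n / fact n"

definition cs_prob :: "real measure set" where
  "cs_prob = {M. prob_space M \<and> sets M = sets borel \<and>
                 (\<exists>K. compact K \<and> emeasure M (UNIV - K) = 0)}"

definition Cc :: "(real \<Rightarrow> real) set" where
  "Cc = {\<phi>. continuous_on UNIV \<phi> \<and> (\<exists>K. compact K \<and> (\<forall>y. y \<notin> K \<longrightarrow> \<phi> y = 0))}"

text \<open>The topology on cs_prob: coarsest topology making every map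
  rho |-> integral of phi wrt rho (phi in Cc) continuous.\<close>
definition vague_top :: "real measure topology" where
  "vague_top = topology (\<lambda>U. U \<subseteq> cs_prob \<and>
     (\<forall>\<rho>\<in>U. \<exists>F \<delta>. finite F \<and> F \<subseteq> Cc \<and> \<delta> > 0 \<and>
        {\<sigma>\<in>cs_prob. \<forall>\<phi>\<in>F. \<bar>integral\<^sup>L \<sigma> \<phi> - integral\<^sup>L \<rho> \<phi>\<bar> < \<delta>} \<subseteq> U))"

fun conv_pow :: "real measure \<Rightarrow> nat \<Rightarrow> real measure" where
  "conv_pow \<rho> 0 = return borel 0"
| "conv_pow \<rho> (Suc n) = convolution \<rho> (conv_pow \<rho> n)"

definition push_h :: "nat \<Rightarrow> real measure \<Rightarrow> real measure" where
  "push_h k M = distr M borel (\<lambda>y. y / real k)"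

definition poisson_mix :: "real \<Rightarrow> (nat \<Rightarrow> real measure) \<Rightarrow> real measure" where
  "poisson_mix l Ms = measure_of UNIV (sets borel)
      (\<lambda>A. \<Sum>n. ennreal (poisson_weight l n) * emeasure (Ms n) A)"

definition Sigma_x :: "real \<Rightarrow> real \<Rightarrow> real measure \<Rightarrow> real measure" where
  "Sigma_x l x \<rho> = poisson_mix l (\<lambda>n. push_h (n + 1) (convolution (return borel x) (conv_pow \<rho> n)))"

definition Sigma_op :: "real \<Rightarrow> real measure \<Rightarrow> real measure" where
  "Sigma_op l \<rho> = poisson_mix l (\<lambda>n. push_h (n + 1) (conv_pow \<rho> (n + 1)))"

end

theory Submission
  imports Defs
begin

definition vnb :: "real measure \<Rightarrow> (real \<Rightarrow> real) set \<Rightarrow> real \<Rightarrow> real measure set" where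
  "vnb \<rho> F \<delta> = {\<sigma>\<in>cs_prob. \<forall>\<phi>\<in>F. \<bar>integral\<^sup>L \<sigma> \<phi> - integral\<^sup>L \<rho> \<phi>\<bar> < \<delta>}"

definition okC :: "(real \<Rightarrow> real) set \<Rightarrow> real measure \<Rightarrow> real measure set \<Rightarrow> bool" where
  "okC C \<rho> A \<longleftrightarrow> (\<exists>F \<delta>. finite F \<and> F \<subseteq> C \<and> \<delta> > 0 \<and> vnb \<rho> F \<delta> \<subseteq> A)"

lemma vnb_mono: "F \<subseteq> G \<Longrightarrow> \<delta>' \<le> \<delta> \<Longrightarrow> vnb \<rho> G \<delta>' \<subseteq> vnb \<rho> F \<delta>"
  unfolding vnb_def by force

lemma okC_mono: "okC C \<rho> A \<Longrightarrow> A \<subseteq> B \<Longrightarrow> okC C \<rho> B"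
  unfolding okC_def by blast

lemma okC_UNIV: "okC C \<rho> UNIV"
  unfolding okC_def by (rule exI[of _ "{}"], rule exI[of _ 1]) auto

lemma okC_Int: assumes "okC C \<rho> A" "okC C \<rho> B" shows "okC C \<rho> (A \<inter> B)"
proof -
  obtain F1 d1 where 1: "finite F1" "F1 \<subseteq> C" "d1 > 0" "vnb \<rho> F1 d1 \<subseteq> A" using assms(1) okC_def by auto
  obtain F2 d2 where 2: "finite F2" "F2 \<subseteq> C" "d2 > 0" "vnb \<rho> F2 d2 \<subseteq> B" using assms(2) okC_def by auto
  have "vnb \<rho> (F1 \<union> F2) (min d1 d2) \<subseteq> A \<inter> B"
    using vnb_mono[of F1 "F1 \<union> F2" "min d1 d2" d1 \<rho>] vnb_mono[of F2 "F1 \<union> F2" "min d1 d2" d2 \<rho>] 1 2 by auto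
  then show ?thesis unfolding okC_def using 1 2 by (intro exI[of _ "F1 \<union> F2"] exI[of _ "min d1 d2"]) auto
qed

lemma okC_INT: assumes "finite I" "\<And>i. i \<in> I \<Longrightarrow> okC C \<rho> (A i)" shows "okC C \<rho> (\<Inter>i\<in>I. A i)"
  using assms
proof (induction I rule: finite_induct)
  case empty then show ?case using okC_UNIV by simp
next
  case (insert x F) then show ?case using okC_Int by simp
qed

lemma istop_vague: "istopology (\<lambda>U. U \<subseteq> cs_prob \<and> (\<forall>\<rho>\<in>U. okC Cc \<rho> U))"
  unfolding istopology_def
proof (rule conjI; intro allI impI)
  fix S T assume a: "S \<subseteq> cs_prob \<and> (\<forall>\<rho>\<in>S. okC Cc \<rho> S)" "T \<subseteq> cs_prob \<and> (\<forall>\<rho>\<in>T. okC Cc \<rho> T)"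
  then show "S \<inter> T \<subseteq> cs_prob \<and> (\<forall>\<rho>\<in>S \<inter> T. okC Cc \<rho> (S \<inter> T))" using okC_Int by blast
next
  fix K assume a: "\<forall>S\<in>K. S \<subseteq> cs_prob \<and> (\<forall>\<rho>\<in>S. okC Cc \<rho> S)"
  show "\<Union>K \<subseteq> cs_prob \<and> (\<forall>\<rho>\<in>\<Union>K. okC Cc \<rho> (\<Union>K))"
  proof
    show "\<Union>K \<subseteq> cs_prob" using a by blast
    show "\<forall>\<rho>\<in>\<Union>K. okC Cc \<rho> (\<Union>K)"
    proof
      fix \<rho> assume "\<rho> \<in> \<Union>K" then obtain S where "S \<in> K" "\<rho> \<in> S" by auto
      then show "okC Cc \<rho> (\<Union>K)" using a okC_mono[of Cc \<rho> S "\<Union>K"] by blast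
    qed
  qed
qed

lemma vague_top_eq: "vague_top = topology (\<lambda>U. U \<subseteq> cs_prob \<and> (\<forall>\<rho>\<in>U. okC Cc \<rho> U))"
  unfolding vague_top_def okC_def vnb_def by simp

lemma openin_vague: "openin vague_top U \<longleftrightarrow> U \<subseteq> cs_prob \<and> (\<forall>\<rho>\<in>U. okC Cc \<rho> U)"
  unfolding vague_top_eq using istop_vague by simp

lemma topspace_vague: "topspace vague_top = cs_prob"
proof -
  have "okC Cc \<rho> cs_prob" for \<rho>
    unfolding okC_def vnb_def by (rule exI[of _ "{}"], rule exI[of _ 1]) auto
  then have "openin vague_top cs_prob" unfolding openin_vague by auto
  then have "cs_prob \<subseteq> topspace vague_top" by (rule openin_subset)
  moreover have "topspace vague_top \<subseteq> cs_prob"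
    unfolding topspace_def using openin_vague by auto
  ultimately show ?thesis by blast
qed

lemma continuous_vague:
  assumes cl: "\<And>\<sigma>. \<sigma> \<in> cs_prob \<Longrightarrow> f \<sigma> \<in> cs_prob"
    and c: "\<And>\<rho> \<phi> \<epsilon>. \<rho> \<in> cs_prob \<Longrightarrow> \<phi> \<in> Cc \<Longrightarrow> \<epsilon> > 0 \<Longrightarrow>
       okC Cc \<rho> {\<sigma>. \<bar>integral\<^sup>L (f \<sigma>) \<phi> - integral\<^sup>L (f \<rho>) \<phi>\<bar> < \<epsilon>}"
  shows "continuous_map vague_top vague_top f"
  unfolding continuous_map topspace_vague
proof (intro conjI allI impI)
  show "f ` cs_prob \<subseteq> cs_prob" using cl by auto
  fix U assume "openin vague_top U"
  then have U: "U \<subseteq> cs_prob" "\<And>\<rho>. \<rho> \<in> U \<Longrightarrow> okC Cc \<rho> U" using openin_vague by auto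
  show "openin vague_top {x \<in> cs_prob. f x \<in> U}"
    unfolding openin_vague
  proof (rule conjI[OF _ ballI])
    show "{x \<in> cs_prob. f x \<in> U} \<subseteq> cs_prob" by blast
  next
    fix \<rho> assume r: "\<rho> \<in> {x \<in> cs_prob. f x \<in> U}"
    then obtain F \<delta> where F: "finite F" "F \<subseteq> Cc" "\<delta> > 0" "vnb (f \<rho>) F \<delta> \<subseteq> U"
      using U(2)[of "f \<rho>"] r unfolding okC_def by blast
    have "okC Cc \<rho> (\<Inter>\<phi>\<in>F. {\<sigma>. \<bar>integral\<^sup>L (f \<sigma>) \<phi> - integral\<^sup>L (f \<rho>) \<phi>\<bar> < \<delta>})"
      using F r by (intro okC_INT c) (auto simp del: mem_Collect_eq)
    then obtain G \<delta>' where G: "finite G" "G \<subseteq> Cc" "\<delta>' > 0"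
      "vnb \<rho> G \<delta>' \<subseteq> (\<Inter>\<phi>\<in>F. {\<sigma>. \<bar>integral\<^sup>L (f \<sigma>) \<phi> - integral\<^sup>L (f \<rho>) \<phi>\<bar> < \<delta>})"
      unfolding okC_def by blast
    have "vnb \<rho> G \<delta>' \<subseteq> {x \<in> cs_prob. f x \<in> U}"
    proof
      fix \<sigma> assume s: "\<sigma> \<in> vnb \<rho> G \<delta>'"
      then have "\<sigma> \<in> cs_prob" by (simp add: vnb_def)
      moreover have "f \<sigma> \<in> vnb (f \<rho>) F \<delta>"
      proof -
        have "\<forall>\<phi>\<in>F. \<bar>integral\<^sup>L (f \<sigma>) \<phi> - integral\<^sup>L (f \<rho>) \<phi>\<bar> < \<delta>" using s G(4) by blast
        then show ?thesis using cl[OF \<open>\<sigma> \<in> cs_prob\<close>] unfolding vnb_def by blast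
      qed
      ultimately show "\<sigma> \<in> {x \<in> cs_prob. f x \<in> U}" using F(4) by auto
    qed
    then show "okC Cc \<rho> {x \<in> cs_prob. f x \<in> U}" using G unfolding okC_def by blast
  qed
qed

definition BC :: "(real \<Rightarrow> real) set" where
  "BC = {g. continuous_on UNIV g \<and> (\<exists>B. \<forall>y. \<bar>g y\<bar> \<le> B)}"

lemma BC_bound: assumes "g \<in> BC" obtains B where "B \<ge> 0" "\<And>y. \<bar>g y\<bar> \<le> B"
proof -
  obtain B where "\<forall>y. \<bar>g y\<bar> \<le> B" using assms BC_def by auto
  then show ?thesis by (intro that[of "max B 0"]) (auto simp: le_max_iff_disj)
qed

lemma BC_cont: "g \<in> BC \<Longrightarrow> continuous_on UNIV g"
  unfolding BC_def by auto

lemma BC_const: "(\<lambda>y. c) \<in> BC"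
  unfolding BC_def by auto

lemma BC_mult: assumes "f \<in> BC" "g \<in> BC" shows "(\<lambda>y. f y * g y) \<in> BC"
proof -
  obtain A B where "\<And>y. \<bar>f y\<bar> \<le> A" "\<And>y. \<bar>g y\<bar> \<le> B" "A \<ge> 0" "B \<ge> 0"
    using BC_bound assms by metis
  then have "\<bar>f y * g y\<bar> \<le> A * B" for y by (simp add: abs_mult mult_mono)
  then show ?thesis using assms unfolding BC_def by (auto intro!: continuous_intros)
qed

lemma BC_add: assumes "f \<in> BC" "g \<in> BC" shows "(\<lambda>y. f y + g y) \<in> BC"
proof -
  obtain A B where "\<And>y. \<bar>f y\<bar> \<le> A" "\<And>y. \<bar>g y\<bar> \<le> B"
    using BC_bound assms by metis
  then have "\<bar>f y + g y\<bar> \<le> A + B" for y by (meson abs_triangle_ineq add_mono order_trans)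
  then show ?thesis using assms unfolding BC_def by (auto intro!: continuous_intros)
qed

lemma BC_diff: assumes "f \<in> BC" "g \<in> BC" shows "(\<lambda>y. f y - g y) \<in> BC"
proof -
  obtain A B where "\<And>y. \<bar>f y\<bar> \<le> A" "\<And>y. \<bar>g y\<bar> \<le> B"
    using BC_bound assms by metis
  then have "\<bar>f y - g y\<bar> \<le> A + B" for y by (meson abs_triangle_ineq4 add_mono order_trans)
  then show ?thesis using assms unfolding BC_def by (auto intro!: continuous_intros)
qed

lemma BC_comp: assumes "g \<in> BC" "continuous_on UNIV h" shows "(\<lambda>y. g (h y)) \<in> BC"
proof -
  obtain B where "\<And>y. \<bar>g y\<bar> \<le> B" using BC_bound assms by metis
  moreover have "continuous_on UNIV (\<lambda>y. g (h y))"
    using continuous_on_compose2[OF BC_cont[OF assms(1)] assms(2)] by auto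
  ultimately show ?thesis unfolding BC_def by auto
qed

lemma Cc_BC: "Cc \<subseteq> BC"
proof
  fix \<phi> assume "\<phi> \<in> Cc"
  then obtain K where c: "continuous_on UNIV \<phi>" and K: "compact K" "\<And>y. y \<notin> K \<Longrightarrow> \<phi> y = 0"
    unfolding Cc_def by auto
  have "compact (\<phi> ` K)" using K(1) c by (meson compact_continuous_image continuous_on_subset subset_UNIV)
  then obtain B where B: "\<forall>z\<in>\<phi> ` K. norm z \<le> B" using compact_imp_bounded bounded_iff by metis
  have "\<bar>\<phi> y\<bar> \<le> max B 0" for y using B K(2)[of y] by (cases "y \<in> K") auto
  then show "\<phi> \<in> BC" unfolding BC_def using c by auto
qed

lemma BC_meas: "g \<in> BC \<Longrightarrow> sets M = sets borel \<Longrightarrow> g \<in> borel_measurable M"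
  using borel_measurable_continuous_onI[OF BC_cont] measurable_cong_sets by blast

lemma BC_int: assumes "g \<in> BC" "prob_space M" "sets M = sets borel" shows "integrable M g"
proof -
  interpret prob_space M by fact
  obtain B where "\<And>y. \<bar>g y\<bar> \<le> B" using BC_bound assms by metis
  then show ?thesis by (intro integrable_const_bound[of _ B] BC_meas assms) auto
qed

lemma prob_int_bound:
  fixes f :: "real \<Rightarrow> real"
  assumes "prob_space M" "integrable M f" "\<And>y. \<bar>f y\<bar> \<le> B"
  shows "\<bar>integral\<^sup>L M f\<bar> \<le> B"
proof -
  interpret prob_space M by fact
  have "\<bar>integral\<^sup>L M f\<bar> \<le> integral\<^sup>L M (\<lambda>y. B)"
    using assms by (intro integral_abs_bound_integral) auto
  then show ?thesis by (simp add: prob_space)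
qed

lemma cs_prob_iff: "M \<in> cs_prob \<longleftrightarrow> prob_space M \<and> sets M = sets borel \<and> (\<exists>R. AE y in M. \<bar>y\<bar> \<le> R)"
proof
  assume "M \<in> cs_prob"
  then obtain K where M: "prob_space M" "sets M = sets borel" "compact K" "emeasure M (UNIV - K) = 0"
    unfolding cs_prob_def by auto
  have sp: "space M = UNIV" using M(2) sets_eq_imp_space_eq by fastforce
  obtain R where R: "\<forall>y\<in>K. norm y \<le> R" using compact_imp_bounded[OF M(3)] bounded_iff by metis
  have "open (UNIV - K)" using M(3) by (simp add: open_Diff compact_imp_closed)
  then have "UNIV - K \<in> sets M" using M(2) by simp
  then have "UNIV - K \<in> null_sets M" using M(4) by auto
  then have "AE y in M. \<bar>y\<bar> \<le> R" using R by (intro AE_I'[of "UNIV - K"]) auto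
  then show "prob_space M \<and> sets M = sets borel \<and> (\<exists>R. AE y in M. \<bar>y\<bar> \<le> R)" using M by auto
next
  assume "prob_space M \<and> sets M = sets borel \<and> (\<exists>R. AE y in M. \<bar>y\<bar> \<le> R)"
  then obtain R where M: "prob_space M" "sets M = sets borel" "AE y in M. \<bar>y\<bar> \<le> R" by auto
  have sp: "space M = UNIV" using M(2) sets_eq_imp_space_eq by fastforce
  have "UNIV - {-R..R} \<in> sets M" using M(2) by auto
  moreover have "{x \<in> space M. \<not> \<bar>x\<bar> \<le> R} = UNIV - {-R..R}" using sp by auto
  ultimately have "emeasure M (UNIV - {-R..R}) = 0" using AE_iff_measurable M(3) by metis
  then show "M \<in> cs_prob" unfolding cs_prob_def using M by (auto intro!: exI[of _ "{-R..R}"])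
qed

definition chi :: "real \<Rightarrow> real \<Rightarrow> real" where
  "chi R t = max 0 (min 1 (R + 1 - \<bar>t\<bar>))"

lemma chi_cont: "continuous_on UNIV (chi R)"
  unfolding chi_def by (intro continuous_intros)

lemma chi_01: "0 \<le> chi R t" "chi R t \<le> 1"
  unfolding chi_def by auto

lemma chi_1: "\<bar>t\<bar> \<le> R \<Longrightarrow> chi R t = 1"
  unfolding chi_def by auto

lemma chi_0: "\<bar>t\<bar> \<ge> R + 1 \<Longrightarrow> chi R t = 0"
  unfolding chi_def by auto

lemma chi_BC: "chi R \<in> BC"
  unfolding BC_def using chi_cont chi_01 by (auto intro!: exI[of _ 1])

lemma Cc_mult_chi: assumes "g \<in> BC" shows "(\<lambda>t. g t * chi R t) \<in> Cc"
proof -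
  have "continuous_on UNIV (\<lambda>t. g t * chi R t)"
    using BC_cont[OF assms] chi_cont by (intro continuous_intros) auto
  moreover have "y \<notin> {-(R+1)..R+1} \<Longrightarrow> g y * chi R y = 0" for y by (auto simp: chi_def abs_if)
  moreover have "compact {-(R+1)..R+1}" by simp
  ultimately show ?thesis unfolding Cc_def by blast
qed

lemma chi_Cc: "chi R \<in> Cc"
  using Cc_mult_chi[OF BC_const, of 1 R] by simp

lemma integral_chi_1: assumes "M \<in> cs_prob" "AE y in M. \<bar>y\<bar> \<le> R"
  shows "integral\<^sup>L M (chi R) = 1"
proof -
  have M: "prob_space M" "sets M = sets borel" using assms cs_prob_iff by auto
  have "integral\<^sup>L M (chi R) = integral\<^sup>L M (\<lambda>y. 1)"
    using assms(2) chi_1 by (intro integral_cong_AE BC_meas[OF chi_BC] M) auto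
  then show ?thesis using M prob_space.prob_space by simp
qed

lemma tight:
  assumes \<rho>: "\<rho> \<in> cs_prob" and \<psi>: "\<psi> \<in> BC" and \<eta>: "\<eta> > 0"
  shows "okC Cc \<rho> {\<sigma>. \<bar>integral\<^sup>L \<sigma> \<psi> - integral\<^sup>L \<rho> \<psi>\<bar> < \<eta>}"
proof -
  obtain R where R: "AE y in \<rho>. \<bar>y\<bar> \<le> R" using \<rho> cs_prob_iff by auto
  have \<rho>p: "prob_space \<rho>" "sets \<rho> = sets borel" using \<rho> cs_prob_iff by auto
  obtain B where B: "B \<ge> 0" "\<And>y. \<bar>\<psi> y\<bar> \<le> B" using BC_bound \<psi> by metis
  define \<delta> where "\<delta> = \<eta> / (B + 1)"
  have \<delta>: "\<delta> > 0" using \<eta> B by (simp add: \<delta>_def)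
  have "\<delta> + B * \<delta> = (B + 1) * \<delta>" by (simp add: algebra_simps)
  also have "\<dots> = \<eta>" using B by (simp add: \<delta>_def)
  finally have e\<delta>: "\<delta> + B * \<delta> = \<eta>" .
  let ?F = "{(\<lambda>t. \<psi> t * chi R t), chi R}"
  have pc: "(\<lambda>t. \<psi> t * chi R t) \<in> BC" using BC_mult[OF \<psi> chi_BC] .
  have r1: "integral\<^sup>L \<rho> (chi R) = 1" using integral_chi_1[OF \<rho> R] .
  have r2: "integral\<^sup>L \<rho> \<psi> = integral\<^sup>L \<rho> (\<lambda>t. \<psi> t * chi R t)"
    using R chi_1 by (intro integral_cong_AE BC_meas[OF \<psi>] BC_meas[OF pc] \<rho>p) auto
  have "vnb \<rho> ?F \<delta> \<subseteq> {\<sigma>. \<bar>integral\<^sup>L \<sigma> \<psi> - integral\<^sup>L \<rho> \<psi>\<bar> < \<eta>}"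
  proof
    fix \<sigma> assume s: "\<sigma> \<in> vnb \<rho> ?F \<delta>"
    then have sc: "\<sigma> \<in> cs_prob" and
      a1: "\<bar>integral\<^sup>L \<sigma> (\<lambda>t. \<psi> t * chi R t) - integral\<^sup>L \<rho> (\<lambda>t. \<psi> t * chi R t)\<bar> < \<delta>" and
      a2: "\<bar>integral\<^sup>L \<sigma> (chi R) - integral\<^sup>L \<rho> (chi R)\<bar> < \<delta>"
      unfolding vnb_def by auto
    have sp: "prob_space \<sigma>" "sets \<sigma> = sets borel" using sc cs_prob_iff by auto
    have i1: "integrable \<sigma> \<psi>" "integrable \<sigma> (\<lambda>t. \<psi> t * chi R t)" "integrable \<sigma> (chi R)"
      "integrable \<sigma> (\<lambda>t. B * (1 - chi R t))"
      using BC_int[OF \<psi> sp] BC_int[OF pc sp] BC_int[OF chi_BC sp]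
        BC_int[OF BC_mult[OF BC_const BC_diff[OF BC_const chi_BC]] sp] by auto
    have "integral\<^sup>L \<sigma> \<psi> - integral\<^sup>L \<sigma> (\<lambda>t. \<psi> t * chi R t) = integral\<^sup>L \<sigma> (\<lambda>t. \<psi> t - \<psi> t * chi R t)"
      using i1 by simp
    also have "\<bar>\<dots>\<bar> \<le> integral\<^sup>L \<sigma> (\<lambda>t. B * (1 - chi R t))"
    proof (rule integral_abs_bound_integral)
      show "integrable \<sigma> (\<lambda>t. \<psi> t - \<psi> t * chi R t)" using i1 by auto
      show "integrable \<sigma> (\<lambda>t. B * (1 - chi R t))" using i1 by auto
      fix t
      have "\<psi> t - \<psi> t * chi R t = \<psi> t * (1 - chi R t)" by (simp add: algebra_simps)
      then have "\<bar>\<psi> t - \<psi> t * chi R t\<bar> = \<bar>\<psi> t\<bar> * \<bar>1 - chi R t\<bar>" by (simp add: abs_mult)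
      also have "\<bar>1 - chi R t\<bar> = 1 - chi R t" using chi_01[of R t] by simp
      finally have "\<bar>\<psi> t - \<psi> t * chi R t\<bar> = \<bar>\<psi> t\<bar> * (1 - chi R t)" .
      also have "\<dots> \<le> B * (1 - chi R t)" using B(2)[of t] chi_01[of R t] by (intro mult_right_mono) auto
      finally show "\<bar>\<psi> t - \<psi> t * chi R t\<bar> \<le> B * (1 - chi R t)" .
    qed
    also have "integral\<^sup>L \<sigma> (\<lambda>t. B * (1 - chi R t)) = B * integral\<^sup>L \<sigma> (\<lambda>t. 1 - chi R t)"
      by simp
    also have "integral\<^sup>L \<sigma> (\<lambda>t. 1 - chi R t) = integral\<^sup>L \<sigma> (\<lambda>t. 1::real) - integral\<^sup>L \<sigma> (chi R)"
    proof -
      have ic: "integrable \<sigma> (\<lambda>t. 1::real)"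
        using prob_space.finite_measure[OF sp(1)] finite_measure.integrable_const by blast
      show ?thesis using Bochner_Integration.integral_diff[OF ic i1(3)] by simp
    qed
    also have "integral\<^sup>L \<sigma> (\<lambda>t. 1::real) = 1" using prob_space.prob_space[OF sp(1)] by simp
    finally have "\<bar>integral\<^sup>L \<sigma> \<psi> - integral\<^sup>L \<sigma> (\<lambda>t. \<psi> t * chi R t)\<bar> \<le> B * (1 - integral\<^sup>L \<sigma> (chi R))" .
    moreover have "B * (1 - integral\<^sup>L \<sigma> (chi R)) \<le> B * \<delta>"
      using a2 r1 B(1) by (intro mult_left_mono) auto
    ultimately show "\<sigma> \<in> {\<sigma>. \<bar>integral\<^sup>L \<sigma> \<psi> - integral\<^sup>L \<rho> \<psi>\<bar> < \<eta>}"
      using a1 r2 e\<delta> by auto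
  qed
  moreover have "?F \<subseteq> Cc" using Cc_mult_chi[OF \<psi>] chi_Cc by auto
  ultimately show ?thesis unfolding okC_def using \<delta> by (intro exI[of _ ?F] exI[of _ \<delta>]) auto
qed

lemma okC_mono': "okC C \<rho> A \<Longrightarrow> A \<inter> cs_prob \<subseteq> B \<Longrightarrow> okC C \<rho> B"
  unfolding okC_def vnb_def by blast

lemma okC_trans: assumes "okC BC \<rho> A" "\<rho> \<in> cs_prob" shows "okC Cc \<rho> A"
proof -
  obtain F \<delta> where F: "finite F" "F \<subseteq> BC" "\<delta> > 0" "vnb \<rho> F \<delta> \<subseteq> A"
    using assms(1) unfolding okC_def by blast
  have "okC Cc \<rho> (\<Inter>\<psi>\<in>F. {\<sigma>. \<bar>integral\<^sup>L \<sigma> \<psi> - integral\<^sup>L \<rho> \<psi>\<bar> < \<delta>})"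
    using F assms(2) by (intro okC_INT tight) auto
  moreover have "(\<Inter>\<psi>\<in>F. {\<sigma>. \<bar>integral\<^sup>L \<sigma> \<psi> - integral\<^sup>L \<rho> \<psi>\<bar> < \<delta>}) \<inter> cs_prob \<subseteq> A"
    using F(4) unfolding vnb_def by blast
  ultimately show ?thesis by (rule okC_mono')
qed

definition nf :: "real measure \<Rightarrow> (real measure \<Rightarrow> real) \<Rightarrow> bool" where
  "nf \<rho> a \<longleftrightarrow> (\<forall>\<theta>>0. okC BC \<rho> {\<sigma>. \<bar>a \<sigma> - a \<rho>\<bar> < \<theta>})"

lemma nfD: "nf \<rho> a \<Longrightarrow> \<theta> > 0 \<Longrightarrow> okC BC \<rho> {\<sigma>. \<bar>a \<sigma> - a \<rho>\<bar> < \<theta>}"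
  unfolding nf_def by blast

lemma nf_const: "nf \<rho> (\<lambda>\<sigma>. c)"
  unfolding nf_def using okC_mono[OF okC_UNIV] by auto

lemma nf_add: assumes "nf \<rho> a" "nf \<rho> b" shows "nf \<rho> (\<lambda>\<sigma>. a \<sigma> + b \<sigma>)"
  unfolding nf_def
proof (intro allI impI)
  fix \<theta> :: real assume "\<theta> > 0"
  then have "okC BC \<rho> ({\<sigma>. \<bar>a \<sigma> - a \<rho>\<bar> < \<theta>/2} \<inter> {\<sigma>. \<bar>b \<sigma> - b \<rho>\<bar> < \<theta>/2})"
    using assms by (intro okC_Int nfD) auto
  moreover have "\<bar>a \<sigma> + b \<sigma> - (a \<rho> + b \<rho>)\<bar> < \<theta>" 
    if "\<bar>a \<sigma> - a \<rho>\<bar> < \<theta>/2" "\<bar>b \<sigma> - b \<rho>\<bar> < \<theta>/2" for \<sigma> using that by arith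
  ultimately show "okC BC \<rho> {\<sigma>. \<bar>a \<sigma> + b \<sigma> - (a \<rho> + b \<rho>)\<bar> < \<theta>}"
    by (elim okC_mono) auto
qed

lemma nf_mult: assumes "nf \<rho> a" "nf \<rho> b" shows "nf \<rho> (\<lambda>\<sigma>. a \<sigma> * b \<sigma>)"
  unfolding nf_def
proof (intro allI impI)
  fix \<theta> :: real assume th: "\<theta> > 0"
  define t where "t = min 1 (\<theta> / (\<bar>a \<rho>\<bar> + \<bar>b \<rho>\<bar> + 2))"
  have X: "\<bar>a \<rho>\<bar> + \<bar>b \<rho>\<bar> + 2 > 0" by simp
  have t1: "t > 0" "t \<le> 1" "t \<le> \<theta> / (\<bar>a \<rho>\<bar> + \<bar>b \<rho>\<bar> + 2)"
    using th X by (auto simp: t_def)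
  then have "t * (\<bar>a \<rho>\<bar> + \<bar>b \<rho>\<bar> + 2) \<le> \<theta> / (\<bar>a \<rho>\<bar> + \<bar>b \<rho>\<bar> + 2) * (\<bar>a \<rho>\<bar> + \<bar>b \<rho>\<bar> + 2)"
    using X by (intro mult_right_mono) auto
  then have t: "t > 0" "t \<le> 1" "t * (\<bar>a \<rho>\<bar> + \<bar>b \<rho>\<bar> + 2) \<le> \<theta>" using t1 X by auto
  have ok: "okC BC \<rho> ({\<sigma>. \<bar>a \<sigma> - a \<rho>\<bar> < t} \<inter> {\<sigma>. \<bar>b \<sigma> - b \<rho>\<bar> < t})"
    using assms t by (intro okC_Int nfD) auto
  have *: "\<bar>a \<sigma> * b \<sigma> - a \<rho> * b \<rho>\<bar> < \<theta>" if "\<bar>a \<sigma> - a \<rho>\<bar> < t" "\<bar>b \<sigma> - b \<rho>\<bar> < t" for \<sigma>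
  proof -
    have bb: "\<bar>b \<sigma>\<bar> \<le> \<bar>b \<rho>\<bar> + 1" using that t by linarith
    have "a \<sigma> * b \<sigma> - a \<rho> * b \<rho> = (a \<sigma> - a \<rho>) * b \<sigma> + a \<rho> * (b \<sigma> - b \<rho>)"
      by (simp add: algebra_simps)
    then have "\<bar>a \<sigma> * b \<sigma> - a \<rho> * b \<rho>\<bar> \<le> \<bar>a \<sigma> - a \<rho>\<bar> * \<bar>b \<sigma>\<bar> + \<bar>a \<rho>\<bar> * \<bar>b \<sigma> - b \<rho>\<bar>"
      by (metis abs_mult abs_triangle_ineq)
    also have "\<dots> \<le> t * (\<bar>b \<rho>\<bar> + 1) + \<bar>a \<rho>\<bar> * t"
      using that bb by (intro add_mono mult_mono) auto
    also have "\<dots> < t * (\<bar>a \<rho>\<bar> + \<bar>b \<rho>\<bar> + 2)" using t by (simp add: algebra_simps)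
    finally show ?thesis using t by linarith
  qed
  show "okC BC \<rho> {\<sigma>. \<bar>a \<sigma> * b \<sigma> - a \<rho> * b \<rho>\<bar> < \<theta>}"
    using * by (intro okC_mono[OF ok]) auto
qed

lemma nf_sum: "finite I \<Longrightarrow> (\<And>i. i \<in> I \<Longrightarrow> nf \<rho> (a i)) \<Longrightarrow> nf \<rho> (\<lambda>\<sigma>. \<Sum>i\<in>I. a i \<sigma>)"
proof (induction I rule: finite_induct)
  case empty then show ?case using nf_const by simp
next
  case (insert x F)
  then show ?case using nf_add[of \<rho> "a x" "\<lambda>\<sigma>. \<Sum>i\<in>F. a i \<sigma>"] by simp
qed

lemma nf_approx:
  assumes "\<And>\<eta>. \<eta> > 0 \<Longrightarrow> \<exists>a' e. nf \<rho> a' \<and> nf \<rho> e \<and> e \<rho> = 0 \<and>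
      (\<forall>\<sigma>\<in>cs_prob. \<bar>a \<sigma> - a' \<sigma>\<bar> \<le> \<eta> + e \<sigma>)"
    and "\<rho> \<in> cs_prob"
  shows "nf \<rho> a"
  unfolding nf_def
proof (intro allI impI)
  fix \<theta> :: real assume th: "\<theta> > 0"
  obtain a' e where ae: "nf \<rho> a'" "nf \<rho> e" "e \<rho> = 0" "\<forall>\<sigma>\<in>cs_prob. \<bar>a \<sigma> - a' \<sigma>\<bar> \<le> \<theta>/4 + e \<sigma>"
    using assms(1)[of "\<theta>/4"] th by auto
  have ok: "okC BC \<rho> ({\<sigma>. \<bar>a' \<sigma> - a' \<rho>\<bar> < \<theta>/4} \<inter> {\<sigma>. \<bar>e \<sigma> - e \<rho>\<bar> < \<theta>/4})"
    using ae th by (intro okC_Int nfD) auto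
  have *: "\<bar>a \<sigma> - a \<rho>\<bar> < \<theta>" if "\<sigma> \<in> cs_prob" "\<bar>a' \<sigma> - a' \<rho>\<bar> < \<theta>/4" "\<bar>e \<sigma> - e \<rho>\<bar> < \<theta>/4" for \<sigma>
  proof -
    have "\<bar>a \<sigma> - a' \<sigma>\<bar> \<le> \<theta>/4 + e \<sigma>" "\<bar>a \<rho> - a' \<rho>\<bar> \<le> \<theta>/4 + e \<rho>" using ae assms(2) that by auto
    then show ?thesis using that ae(3) by linarith
  qed
  show "okC BC \<rho> {\<sigma>. \<bar>a \<sigma> - a \<rho>\<bar> < \<theta>}"
    using * by (intro okC_mono'[OF ok]) auto
qed

lemma nf_cong: assumes "\<rho> \<in> cs_prob" "\<And>\<sigma>. \<sigma> \<in> cs_prob \<Longrightarrow> a \<sigma> = b \<sigma>" "nf \<rho> a"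
  shows "nf \<rho> b"
  unfolding nf_def
proof (intro allI impI)
  fix \<theta> :: real assume "\<theta> > 0"
  then have ok: "okC BC \<rho> {\<sigma>. \<bar>a \<sigma> - a \<rho>\<bar> < \<theta>}" using assms(3) nfD by auto
  show "okC BC \<rho> {\<sigma>. \<bar>b \<sigma> - b \<rho>\<bar> < \<theta>}"
    using assms(1,2) by (intro okC_mono'[OF ok]) auto
qed

definition WC :: "real measure \<Rightarrow> (real measure \<Rightarrow> real measure) \<Rightarrow> bool" where
  "WC \<rho> T \<longleftrightarrow> (\<forall>\<sigma>\<in>cs_prob. T \<sigma> \<in> cs_prob) \<and> (\<forall>g\<in>BC. nf \<rho> (\<lambda>\<sigma>. integral\<^sup>L (T \<sigma>) g))"

lemma WC_id: "WC \<rho> (\<lambda>\<sigma>. \<sigma>)"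
  unfolding WC_def nf_def
proof (intro conjI ballI allI impI)
  fix g \<theta> assume "g \<in> BC" "(\<theta>::real) > 0"
  then show "okC BC \<rho> {\<sigma>. \<bar>integral\<^sup>L \<sigma> g - integral\<^sup>L \<rho> g\<bar> < \<theta>}"
    unfolding okC_def vnb_def by (intro exI[of _ "{g}"] exI[of _ \<theta>]) auto
qed auto

lemma WC_const: "M \<in> cs_prob \<Longrightarrow> WC \<rho> (\<lambda>\<sigma>. M)"
  unfolding WC_def using nf_const by auto

lemma meas_borel: "sets M = sets borel \<Longrightarrow> f \<in> borel_measurable borel \<Longrightarrow> f \<in> borel_measurable M"
  using measurable_cong_sets[of M borel borel borel] by simp

lemma meas_borel': "sets M = sets borel \<Longrightarrow> f \<in> measurable borel borel \<Longrightarrow> f \<in> measurable M borel"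
  using measurable_cong_sets[of M borel borel borel] by simp

lemma push_cs: assumes "M \<in> cs_prob" "k \<ge> 1" "AE y in M. \<bar>y\<bar> \<le> R"
  shows "push_h k M \<in> cs_prob" "AE y in push_h k M. \<bar>y\<bar> \<le> R / real k"
proof -
  have M: "prob_space M" "sets M = sets borel" using assms cs_prob_iff by auto
  have m: "(\<lambda>y. y / real k) \<in> measurable M borel" by (rule meas_borel'[OF M(2)]) measurable
  have yk: "\<bar>y / real k\<bar> \<le> R / real k" if "\<bar>y\<bar> \<le> R" for y
  proof -
    have "\<bar>y / real k\<bar> = \<bar>y\<bar> / real k" by (simp add: abs_divide)
    also have "\<dots> \<le> R / real k" using that by (intro divide_right_mono) auto
    finally show ?thesis .
  qed
  have "AE y in M. \<bar>y / real k\<bar> \<le> R / real k" using assms(3) by (rule AE_mp) (intro AE_I2 impI yk)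
  then show ae: "AE y in push_h k M. \<bar>y\<bar> \<le> R / real k"
    unfolding push_h_def by (subst AE_distr_iff[OF m]) auto
  have "prob_space (push_h k M)" unfolding push_h_def using prob_space.prob_space_distr[OF M(1) m] .
  moreover have "sets (push_h k M) = sets borel" by (simp add: push_h_def)
  ultimately show "push_h k M \<in> cs_prob" unfolding cs_prob_iff using ae by blast
qed

lemma integral_push: assumes "sets M = sets borel" "g \<in> BC"
  shows "integral\<^sup>L (push_h k M) g = integral\<^sup>L M (\<lambda>y. g (y / real k))"
proof -
  have m: "(\<lambda>y. y / real k) \<in> measurable M borel" by (rule meas_borel'[OF assms(1)]) measurable
  show ?thesis unfolding push_h_def
    by (rule integral_distr[OF m]) (rule BC_meas[OF assms(2)], simp)
qed

lemma WC_cs: "WC \<rho> T \<Longrightarrow> \<sigma> \<in> cs_prob \<Longrightarrow> T \<sigma> \<in> cs_prob"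
  unfolding WC_def by blast

lemma WC_nf: "WC \<rho> T \<Longrightarrow> g \<in> BC \<Longrightarrow> nf \<rho> (\<lambda>\<sigma>. integral\<^sup>L (T \<sigma>) g)"
  unfolding WC_def by blast

lemma WC_push: assumes "WC \<rho> T" "k \<ge> 1" "\<rho> \<in> cs_prob" shows "WC \<rho> (\<lambda>\<sigma>. push_h k (T \<sigma>))"
  unfolding WC_def
proof (intro conjI ballI)
  fix \<sigma> assume s: "\<sigma> \<in> cs_prob"
  have Ts: "T \<sigma> \<in> cs_prob" using WC_cs[OF assms(1) s] .
  then obtain R where "AE y in T \<sigma>. \<bar>y\<bar> \<le> R" unfolding cs_prob_iff by blast
  then show "push_h k (T \<sigma>) \<in> cs_prob" using push_cs(1)[OF Ts assms(2)] by simp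
next
  fix g assume g: "g \<in> BC"
  have ck: "continuous_on UNIV (\<lambda>y::real. y / real k)"
    using assms(2) by (intro continuous_on_divide continuous_on_id continuous_on_const) auto
  have gk: "(\<lambda>y. g (y / real k)) \<in> BC" using BC_comp[OF g ck] .
  have n: "nf \<rho> (\<lambda>\<sigma>. integral\<^sup>L (T \<sigma>) (\<lambda>y. g (y / real k)))" using WC_nf[OF assms(1) gk] .
  have e: "integral\<^sup>L (T \<sigma>) (\<lambda>y. g (y / real k)) = integral\<^sup>L (push_h k (T \<sigma>)) g"
    if "\<sigma> \<in> cs_prob" for \<sigma>
  proof -
    have "sets (T \<sigma>) = sets borel" using WC_cs[OF assms(1) that] unfolding cs_prob_iff by simp
    then show ?thesis using integral_push[OF _ g] by simp
  qed
  show "nf \<rho> (\<lambda>\<sigma>. integral\<^sup>L (push_h k (T \<sigma>)) g)"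
    by (rule nf_cong[OF assms(3) e n])
qed

definition evL :: "((real \<Rightarrow> real) \<times> (real \<Rightarrow> real)) list \<Rightarrow> real \<Rightarrow> real \<Rightarrow> real" where
  "evL L a b = (\<Sum>uv\<leftarrow>L. fst uv a * snd uv b)"

definition mulL :: "((real \<Rightarrow> real) \<times> (real \<Rightarrow> real)) list \<Rightarrow> ((real \<Rightarrow> real) \<times> (real \<Rightarrow> real)) list \<Rightarrow> ((real \<Rightarrow> real) \<times> (real \<Rightarrow> real)) list" where
  "mulL L1 L2 = concat (map (\<lambda>p. map (\<lambda>q. (\<lambda>a. fst p a * fst q a, \<lambda>b. snd p b * snd q b)) L2) L1)"

lemma ev_append: "evL (L1 @ L2) a b = evL L1 a b + evL L2 a b"
  unfolding evL_def by simp

lemma ev_mulL: "evL (mulL L1 L2) a b = evL L1 a b * evL L2 a b"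
proof (induction L1)
  case Nil then show ?case by (simp add: evL_def mulL_def)
next
  case (Cons p L1)
  have m: "mulL (p # L1) L2 = map (\<lambda>q. (\<lambda>a. fst p a * fst q a, \<lambda>b. snd p b * snd q b)) L2 @ mulL L1 L2"
    by (simp add: mulL_def)
  have "evL (map (\<lambda>q. (\<lambda>a. fst p a * fst q a, \<lambda>b. snd p b * snd q b)) L2) a b
      = (\<Sum>q\<leftarrow>L2. (fst p a * snd p b) * (fst q a * snd q b))"
    unfolding evL_def by (simp add: o_def ac_simps)
  also have "\<dots> = (fst p a * snd p b) * evL L2 a b"
    unfolding evL_def by (rule sum_list_const_mult)
  finally have "evL (map (\<lambda>q. (\<lambda>a. fst p a * fst q a, \<lambda>b. snd p b * snd q b)) L2) a b = (fst p a * snd p b) * evL L2 a b" .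
  moreover have "evL (p # L1) a b = fst p a * snd p b + evL L1 a b" by (simp add: evL_def)
  ultimately show ?case using Cons by (simp add: m ev_append algebra_simps)
qed

definition contL :: "((real \<Rightarrow> real) \<times> (real \<Rightarrow> real)) list \<Rightarrow> bool" where
  "contL L \<longleftrightarrow> (\<forall>uv\<in>set L. continuous_on UNIV (fst uv) \<and> continuous_on UNIV (snd uv))"

lemma poly_sep:
  fixes p :: "real \<times> real \<Rightarrow> real"
  assumes "real_polynomial_function p"
  shows "\<exists>L. contL L \<and> (\<forall>z. p z = evL L (fst z) (snd z))"
  using assms
proof (induction p rule: real_polynomial_function.induct)
  case (linear f)
  let ?L = "[(\<lambda>a. a * f (1,0), \<lambda>b. 1), (\<lambda>a. 1, \<lambda>b. b * f (0,1))]"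
  have fz: "f z = fst z * f (1,0) + snd z * f (0,1)" for z
  proof -
    have z: "z = fst z *\<^sub>R (1,0) + snd z *\<^sub>R (0,1)" by (cases z) auto
    have "f z = f (fst z *\<^sub>R (1,0) + snd z *\<^sub>R (0,1))" using z by metis
    also have "\<dots> = f (fst z *\<^sub>R (1,0)) + f (snd z *\<^sub>R (0,1))"
      by (rule linear_simps(1)[OF linear])
    finally have "f z = f (fst z *\<^sub>R (1,0)) + f (snd z *\<^sub>R (0,1))" .
    also have "f (fst z *\<^sub>R (1,0)) = fst z *\<^sub>R f (1,0)" by (rule linear_simps(5)[OF linear])
    also have "f (snd z *\<^sub>R (0,1)) = snd z *\<^sub>R f (0,1)" by (rule linear_simps(5)[OF linear])
    finally show ?thesis by simp
  qed
  moreover have "contL ?L" unfolding contL_def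
    by (simp add: continuous_on_mult[OF continuous_on_id continuous_on_const])
  moreover have "f z = evL ?L (fst z) (snd z)" for z
  proof -
    have "evL ?L (fst z) (snd z) = fst z * f (1,0) + snd z * f (0,1)" by (simp add: evL_def)
    then show ?thesis using fz[of z] by linarith
  qed
  ultimately show ?case by blast
next
  case (const c)
  show ?case by (intro exI[of _ "[(\<lambda>a. c, \<lambda>b. 1)]"]) (simp add: evL_def contL_def)
next
  case (add f g)
  then obtain L1 L2 where "contL L1" "\<forall>z. f z = evL L1 (fst z) (snd z)" "contL L2" "\<forall>z. g z = evL L2 (fst z) (snd z)"
    by blast
  then show ?case by (intro exI[of _ "L1 @ L2"]) (auto simp: ev_append contL_def)
next
  case (mult f g)
  then obtain L1 L2 where L: "contL L1" "\<forall>z. f z = evL L1 (fst z) (snd z)" "contL L2" "\<forall>z. g z = evL L2 (fst z) (snd z)"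
    by blast
  have "contL (mulL L1 L2)" using L(1,3) unfolding contL_def mulL_def
    by (auto intro!: continuous_on_mult)
  then show ?case using L by (intro exI[of _ "mulL L1 L2"]) (auto simp: ev_mulL)
qed

lemma cont_chi_BC: assumes "continuous_on UNIV u" shows "(\<lambda>t. u t * chi R t) \<in> BC"
proof -
  have "compact {-(R+1)..R+1}" by simp
  moreover have "continuous_on {-(R+1)..R+1} u" using assms continuous_on_subset by blast
  ultimately have "compact (u ` {-(R+1)..R+1})" by (rule compact_continuous_image[rotated])
  then obtain C where C: "\<forall>z\<in>u ` {-(R+1)..R+1}. norm z \<le> C" using compact_imp_bounded bounded_iff by metis
  have "\<bar>u t * chi R t\<bar> \<le> max C 0" for t
  proof (cases "t \<in> {-(R+1)..R+1}")
    case True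
    then have "\<bar>u t\<bar> \<le> C" using C by auto
    then have "\<bar>u t\<bar> * chi R t \<le> C * 1" using chi_01[of R t] by (intro mult_mono) auto
    then show ?thesis by (simp add: abs_mult chi_01)
  next
    case False
    then have "chi R t = 0" by (auto simp: chi_def abs_if)
    then show ?thesis by simp
  qed
  moreover have "continuous_on UNIV (\<lambda>t. u t * chi R t)" using assms chi_cont by (intro continuous_on_mult) auto
  ultimately show ?thesis unfolding BC_def by blast
qed

lemma pair_sets: assumes "M \<in> cs_prob" "N \<in> cs_prob"
  shows "sets (M \<Otimes>\<^sub>M N) = sets (borel :: (real \<times> real) measure)"
proof -
  have "sets M = sets borel" "sets N = sets borel" using assms cs_prob_iff by auto
  then have "sets (M \<Otimes>\<^sub>M N) = sets (borel \<Otimes>\<^sub>M borel :: (real \<times> real) measure)"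
    by (intro sets_pair_measure_cong)
  then show ?thesis by (simp only: borel_prod)
qed

lemma pair_prob: assumes "M \<in> cs_prob" "N \<in> cs_prob" shows "prob_space (M \<Otimes>\<^sub>M N)"
  using assms cs_prob_iff prob_space_pair by blast

lemma pair_int_cont:
  assumes "M \<in> cs_prob" "N \<in> cs_prob" "continuous_on UNIV H" "\<And>z. \<bar>H z\<bar> \<le> C"
  shows "integrable (M \<Otimes>\<^sub>M N) (H :: real \<times> real \<Rightarrow> real)"
proof -
  have m: "H \<in> borel_measurable (M \<Otimes>\<^sub>M N)"
    by (subst measurable_cong_sets[where N=borel and N'=borel, OF pair_sets[OF assms(1,2)] refl])
      (rule borel_measurable_continuous_onI[OF assms(3)])
  interpret prob_space "M \<Otimes>\<^sub>M N" using pair_prob[OF assms(1,2)] .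
  show ?thesis using m by (intro integrable_const_bound[of _ C]) (auto simp: assms(4))
qed

lemma cont_sep: assumes "U \<in> BC" "V \<in> BC" shows "continuous_on UNIV (\<lambda>z::real\<times>real. U (fst z) * V (snd z))"
proof -
  have "continuous_on UNIV (\<lambda>z::real\<times>real. U (fst z))"
    using continuous_on_compose2[OF BC_cont[OF assms(1)] continuous_on_fst[OF continuous_on_id]] by auto
  moreover have "continuous_on UNIV (\<lambda>z::real\<times>real. V (snd z))"
    using continuous_on_compose2[OF BC_cont[OF assms(2)] continuous_on_snd[OF continuous_on_id]] by auto
  ultimately show ?thesis by (rule continuous_on_mult)
qed

lemma pair_int_sep:
  assumes "M \<in> cs_prob" "N \<in> cs_prob" "U \<in> BC" "V \<in> BC"
  shows "integrable (M \<Otimes>\<^sub>M N) (\<lambda>z. U (fst z) * V (snd z))"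
proof -
  obtain A B where "\<And>y. \<bar>U y\<bar> \<le> A" "\<And>y. \<bar>V y\<bar> \<le> B" "A \<ge> 0" "B \<ge> 0"
    using BC_bound assms(3,4) by metis
  then have "\<bar>U (fst z) * V (snd z)\<bar> \<le> A * B" for z by (simp add: abs_mult mult_mono)
  then show ?thesis using pair_int_cont[OF assms(1,2) cont_sep[OF assms(3,4)]] by blast
qed

lemma int_sep:
  assumes "M \<in> cs_prob" "N \<in> cs_prob" "U \<in> BC" "V \<in> BC"
  shows "integral\<^sup>L (M \<Otimes>\<^sub>M N) (\<lambda>z. U (fst z) * V (snd z)) = integral\<^sup>L M U * integral\<^sup>L N V"
proof -
  have "prob_space M" "prob_space N" using assms cs_prob_iff by auto
  then interpret pair_prob_space M N by (simp add: pair_prob_space_def pair_sigma_finite_def prob_space_imp_sigma_finite)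
  have "integral\<^sup>L (M \<Otimes>\<^sub>M N) (\<lambda>z. U (fst z) * V (snd z)) = (\<integral>x. (\<integral>y. U x * V y \<partial>N) \<partial>M)"
    using integral_fst'[OF pair_int_sep[OF assms]] by simp
  also have "\<dots> = (\<integral>x. U x * integral\<^sup>L N V \<partial>M)" by simp
  also have "\<dots> = integral\<^sup>L M U * integral\<^sup>L N V" by simp
  finally show ?thesis .
qed

lemma integrable_sum_list: "(\<And>x. x \<in> set L \<Longrightarrow> integrable M (f x)) \<Longrightarrow> integrable M (\<lambda>z. \<Sum>x\<leftarrow>L. (f x z :: real))"
  by (induction L) auto

lemma integral_sum_list: "(\<And>x. x \<in> set L \<Longrightarrow> integrable M (f x)) \<Longrightarrow>
    integral\<^sup>L M (\<lambda>z. \<Sum>x\<leftarrow>L. (f x z :: real)) = (\<Sum>x\<leftarrow>L. integral\<^sup>L M (f x))"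
proof (induction L)
  case Nil then show ?case by simp
next
  case (Cons a L)
  have "integral\<^sup>L M (\<lambda>z. \<Sum>x\<leftarrow>a # L. f x z) = integral\<^sup>L M (\<lambda>z. f a z + (\<Sum>x\<leftarrow>L. f x z))" by simp
  also have "\<dots> = integral\<^sup>L M (f a) + integral\<^sup>L M (\<lambda>z. \<Sum>x\<leftarrow>L. f x z)"
    using Cons by (intro Bochner_Integration.integral_add integrable_sum_list) auto
  finally show ?case using Cons by simp
qed

lemma nf_sum_list: "(\<And>x. x \<in> set L \<Longrightarrow> nf \<rho> (f x)) \<Longrightarrow> nf \<rho> (\<lambda>\<sigma>. \<Sum>x\<leftarrow>L. f x \<sigma>)"
proof (induction L)
  case Nil then show ?case using nf_const by simp
next
  case (Cons a L)
  then show ?case using nf_add[of \<rho> "f a" "\<lambda>\<sigma>. \<Sum>x\<leftarrow>L. f x \<sigma>"] by simp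
qed

lemma nf_diff: assumes "nf \<rho> a" "nf \<rho> b" shows "nf \<rho> (\<lambda>\<sigma>. a \<sigma> - b \<sigma>)"
proof -
  have "nf \<rho> (\<lambda>\<sigma>. a \<sigma> + (-1) * b \<sigma>)" using assms by (intro nf_add nf_mult nf_const)
  then show ?thesis by simp
qed

lemma chi_prod_0: assumes "z \<notin> {-(R+1)..R+1} \<times> {-(R+1)..R+1}"
  shows "chi R (fst z) * chi R (snd z) = 0"
proof -
  have "\<bar>fst z\<bar> \<ge> R + 1 \<or> \<bar>snd z\<bar> \<ge> R + 1" using assms by (cases z) (auto simp: abs_if)
  then show ?thesis using chi_0 by auto
qed

lemma WC_supp: assumes "WC \<rho> T" "\<rho> \<in> cs_prob" obtains R where "AE y in T \<rho>. \<bar>y\<bar> \<le> R"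
  using WC_cs[OF assms] unfolding cs_prob_iff by blast

lemma nf_pair:
  assumes \<rho>: "\<rho> \<in> cs_prob" and T1: "WC \<rho> T1" and T2: "WC \<rho> T2"
    and G: "continuous_on UNIV G" "\<And>z. \<bar>G z\<bar> \<le> B"
  shows "nf \<rho> (\<lambda>\<sigma>. integral\<^sup>L (T1 \<sigma> \<Otimes>\<^sub>M T2 \<sigma>) G)"
proof (rule nf_approx[OF _ \<rho>])
  fix \<eta> :: real assume \<eta>: "\<eta> > 0"
  obtain R1 where R1: "AE y in T1 \<rho>. \<bar>y\<bar> \<le> R1" using WC_supp[OF T1 \<rho>] by blast
  obtain R2 where R2: "AE y in T2 \<rho>. \<bar>y\<bar> \<le> R2" using WC_supp[OF T2 \<rho>] by blast
  define R where "R = max R1 R2"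
  have RR1: "AE y in T1 \<rho>. \<bar>y\<bar> \<le> R" using R1 by (rule AE_mp) (intro AE_I2 impI, simp add: R_def)
  have RR2: "AE y in T2 \<rho>. \<bar>y\<bar> \<le> R" using R2 by (rule AE_mp) (intro AE_I2 impI, simp add: R_def)
  define S where "S = {-(R+1)..R+1} \<times> {-(R+1)..R+1}"
  have cS: "compact S" unfolding S_def by (intro compact_Times compact_Icc)
  have GS: "continuous_on S G" using G(1) continuous_on_subset by blast
  obtain p where p: "real_polynomial_function p" "\<And>z. z \<in> S \<Longrightarrow> \<bar>G z - p z\<bar> < \<eta>/2"
    using Stone_Weierstrass_real_polynomial_function[OF cS GS, of "\<eta>/2"] \<eta> by auto
  obtain L where L: "contL L" "\<And>z. p z = evL L (fst z) (snd z)" using poly_sep[OF p(1)] by blast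
  define U where "U uv = (\<lambda>a. fst uv a * chi R a)" for uv :: "(real \<Rightarrow> real) \<times> (real \<Rightarrow> real)"
  define V where "V uv = (\<lambda>b. snd uv b * chi R b)" for uv :: "(real \<Rightarrow> real) \<times> (real \<Rightarrow> real)"
  have UV: "U uv \<in> BC" "V uv \<in> BC" if "uv \<in> set L" for uv
    using L(1) that unfolding contL_def U_def V_def by (auto intro: cont_chi_BC)
  define a' where "a' \<sigma> = (\<Sum>uv\<leftarrow>L. integral\<^sup>L (T1 \<sigma>) (U uv) * integral\<^sup>L (T2 \<sigma>) (V uv))" for \<sigma>
  define e where "e \<sigma> = B * (1 - integral\<^sup>L (T1 \<sigma>) (chi R) * integral\<^sup>L (T2 \<sigma>) (chi R))" for \<sigma>
  have na: "nf \<rho> a'" unfolding a'_def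
    using UV by (intro nf_sum_list nf_mult WC_nf[OF T1] WC_nf[OF T2]) auto
  have ne: "nf \<rho> e" unfolding e_def
    by (intro nf_mult nf_const nf_diff WC_nf[OF T1] WC_nf[OF T2] chi_BC)
  have e0: "e \<rho> = 0" unfolding e_def
    using integral_chi_1[OF WC_cs[OF T1 \<rho>] RR1] integral_chi_1[OF WC_cs[OF T2 \<rho>] RR2] by simp
  have main: "\<bar>integral\<^sup>L (T1 \<sigma> \<Otimes>\<^sub>M T2 \<sigma>) G - a' \<sigma>\<bar> \<le> \<eta> + e \<sigma>" if s: "\<sigma> \<in> cs_prob" for \<sigma>
  proof -
    define \<mu> where "\<mu> = T1 \<sigma>"
    define \<nu> where "\<nu> = T2 \<sigma>"
    have \<mu>: "\<mu> \<in> cs_prob" using WC_cs[OF T1 s] \<mu>_def by simp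
    have \<nu>: "\<nu> \<in> cs_prob" using WC_cs[OF T2 s] \<nu>_def by simp
    define q where "q z = (\<Sum>uv\<leftarrow>L. U uv (fst z) * V uv (snd z))" for z :: "real \<times> real"
    have q_eq: "q z = p z * (chi R (fst z) * chi R (snd z))" for z
    proof -
      have "p z * (chi R (fst z) * chi R (snd z)) = (\<Sum>uv\<leftarrow>L. (fst uv (fst z) * snd uv (snd z)) * (chi R (fst z) * chi R (snd z)))"
        unfolding L(2) evL_def by (rule sum_list_mult_const[symmetric])
      also have "\<dots> = q z" unfolding q_def U_def V_def by (simp add: ac_simps)
      finally show ?thesis by simp
    qed
    have iq: "integrable (\<mu> \<Otimes>\<^sub>M \<nu>) q" unfolding q_def
      using UV by (intro integrable_sum_list pair_int_sep[OF \<mu> \<nu>]) auto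
    have Iq: "integral\<^sup>L (\<mu> \<Otimes>\<^sub>M \<nu>) q = a' \<sigma>"
    proof -
      have "integral\<^sup>L (\<mu> \<Otimes>\<^sub>M \<nu>) q = (\<Sum>uv\<leftarrow>L. integral\<^sup>L (\<mu> \<Otimes>\<^sub>M \<nu>) (\<lambda>z. U uv (fst z) * V uv (snd z)))"
        unfolding q_def using UV by (intro integral_sum_list pair_int_sep[OF \<mu> \<nu>]) auto
      also have "\<dots> = a' \<sigma>" unfolding a'_def \<mu>_def[symmetric] \<nu>_def[symmetric]
        using UV by (intro arg_cong[where f=sum_list] map_cong refl int_sep[OF \<mu> \<nu>]) auto
      finally show ?thesis .
    qed
    define w where "w z = B * (1 - chi R (fst z) * chi R (snd z)) + \<eta>/2" for z :: "real \<times> real"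
    have bnd: "\<bar>G z - q z\<bar> \<le> w z" for z
    proof -
      let ?c = "chi R (fst z) * chi R (snd z)"
      have c01: "0 \<le> ?c" "?c \<le> 1" using chi_01 by (auto intro: mult_nonneg_nonneg mult_le_one)
      have "G z - q z = G z * (1 - ?c) + (G z - p z) * ?c" using q_eq[of z] by (simp add: algebra_simps)
      then have "\<bar>G z - q z\<bar> \<le> \<bar>G z\<bar> * (1 - ?c) + \<bar>G z - p z\<bar> * ?c"
        using c01 by (metis abs_mult abs_of_nonneg abs_triangle_ineq diff_ge_0_iff_ge)
      also have "\<bar>G z\<bar> * (1 - ?c) \<le> B * (1 - ?c)" using G(2) c01 by (intro mult_right_mono) auto
      also have "\<bar>G z - p z\<bar> * ?c \<le> \<eta>/2"
      proof (cases "z \<in> S")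
        case True
        then have "\<bar>G z - p z\<bar> * ?c \<le> (\<eta>/2) * 1" using p(2)[of z] c01 \<eta> by (intro mult_mono) auto
        then show ?thesis by simp
      next
        case False
        then have "?c = 0" using chi_prod_0[of z R] unfolding S_def by blast
        then have "\<bar>G z - p z\<bar> * ?c = 0" by (metis mult_zero_right)
        then show ?thesis using \<eta> by linarith
      qed
      finally show ?thesis unfolding w_def by simp
    qed
    have cw: "continuous_on UNIV w" unfolding w_def
      by (intro continuous_on_add continuous_on_mult continuous_on_diff continuous_on_const
          cont_sep[OF chi_BC chi_BC])
    have wb: "\<bar>w z\<bar> \<le> \<bar>B\<bar> + \<eta>" for z
    proof -
      have c01: "0 \<le> chi R (fst z) * chi R (snd z)" "chi R (fst z) * chi R (snd z) \<le> 1"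
        using chi_01 by (auto intro: mult_nonneg_nonneg mult_le_one)
      then have "\<bar>B * (1 - chi R (fst z) * chi R (snd z))\<bar> \<le> \<bar>B\<bar>"
        by (simp add: abs_mult mult_left_le)
      then show ?thesis unfolding w_def using \<eta> by (simp add: abs_if split: if_splits; linarith)
    qed
    have iw: "integrable (\<mu> \<Otimes>\<^sub>M \<nu>) w" using pair_int_cont[OF \<mu> \<nu> cw wb] .
    have iG: "integrable (\<mu> \<Otimes>\<^sub>M \<nu>) G" using pair_int_cont[OF \<mu> \<nu> G] .
    have ichi: "integrable (\<mu> \<Otimes>\<^sub>M \<nu>) (\<lambda>z. chi R (fst z) * chi R (snd z))"
      using pair_int_sep[OF \<mu> \<nu> chi_BC chi_BC] .
    interpret P: prob_space "\<mu> \<Otimes>\<^sub>M \<nu>" using pair_prob[OF \<mu> \<nu>] .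
    have Iw: "integral\<^sup>L (\<mu> \<Otimes>\<^sub>M \<nu>) w = e \<sigma> + \<eta>/2"
    proof -
      have "integral\<^sup>L (\<mu> \<Otimes>\<^sub>M \<nu>) w = B * integral\<^sup>L (\<mu> \<Otimes>\<^sub>M \<nu>) (\<lambda>z. 1 - chi R (fst z) * chi R (snd z)) + \<eta>/2"
        unfolding w_def using ichi by (simp add: P.prob_space)
      also have "integral\<^sup>L (\<mu> \<Otimes>\<^sub>M \<nu>) (\<lambda>z. 1 - chi R (fst z) * chi R (snd z)) = 1 - integral\<^sup>L \<mu> (chi R) * integral\<^sup>L \<nu> (chi R)"
        using ichi int_sep[OF \<mu> \<nu> chi_BC chi_BC] by (simp add: P.prob_space)
      finally show ?thesis unfolding e_def \<mu>_def \<nu>_def by simp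
    qed
    have "\<bar>integral\<^sup>L (\<mu> \<Otimes>\<^sub>M \<nu>) G - integral\<^sup>L (\<mu> \<Otimes>\<^sub>M \<nu>) q\<bar> = \<bar>integral\<^sup>L (\<mu> \<Otimes>\<^sub>M \<nu>) (\<lambda>z. G z - q z)\<bar>"
      using iG iq by simp
    also have "\<dots> \<le> integral\<^sup>L (\<mu> \<Otimes>\<^sub>M \<nu>) w"
      using iG iq iw bnd by (intro integral_abs_bound_integral) auto
    finally show ?thesis using Iq Iw \<eta> unfolding \<mu>_def \<nu>_def by simp
  qed
  show "\<exists>a' e. nf \<rho> a' \<and> nf \<rho> e \<and> e \<rho> = 0 \<and> (\<forall>\<sigma>\<in>cs_prob. \<bar>integral\<^sup>L (T1 \<sigma> \<Otimes>\<^sub>M T2 \<sigma>) G - a' \<sigma>\<bar> \<le> \<eta> + e \<sigma>)"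
    using na ne e0 main by blast
qed

lemma conv_meas: assumes "M \<in> cs_prob" "N \<in> cs_prob"
  shows "(\<lambda>(x, y). x + y :: real) \<in> measurable (M \<Otimes>\<^sub>M N) borel"
proof -
  have "(\<lambda>z::real\<times>real. fst z + snd z) \<in> borel_measurable borel"
    by (intro borel_measurable_continuous_onI continuous_on_add continuous_on_fst continuous_on_snd continuous_on_id)
  then show ?thesis
    by (subst measurable_cong_sets[where N=borel and N'=borel, OF pair_sets[OF assms] refl]) (simp add: split_beta')
qed

lemma conv_cs: assumes M: "M \<in> cs_prob" and N: "N \<in> cs_prob"
  and R1: "AE y in M. \<bar>y\<bar> \<le> R1" and R2: "AE y in N. \<bar>y\<bar> \<le> R2"
  shows "convolution M N \<in> cs_prob" "AE y in convolution M N. \<bar>y\<bar> \<le> R1 + R2"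
proof -
  have m: "(\<lambda>(x, y). x + y :: real) \<in> measurable (M \<Otimes>\<^sub>M N) borel" using conv_meas[OF M N] .
  have pM: "prob_space M" and pN: "prob_space N" using M N cs_prob_iff by auto
  then interpret pair_prob_space M N by (simp add: pair_prob_space_def pair_sigma_finite_def prob_space_imp_sigma_finite)
  have "AE x in M. AE y in N. \<bar>x + y\<bar> \<le> R1 + R2"
    using R1
  proof (rule AE_mp)
    show "AE x in M. \<bar>x\<bar> \<le> R1 \<longrightarrow> (AE y in N. \<bar>x + y\<bar> \<le> R1 + R2)"
    proof (rule AE_I2, rule impI)
      fix x :: real assume x: "\<bar>x\<bar> \<le> R1"
      show "AE y in N. \<bar>x + y\<bar> \<le> R1 + R2" using R2 by (rule AE_mp) (rule AE_I2, use x in auto)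
    qed
  qed
  then have "AE z in M \<Otimes>\<^sub>M N. \<bar>fst z + snd z\<bar> \<le> R1 + R2"
  proof (intro AE_pair_measure)
    have "(\<lambda>z. fst z + snd z :: real) \<in> measurable (M \<Otimes>\<^sub>M N) borel" using m by (simp add: split_beta')
    then show "{x \<in> space (M \<Otimes>\<^sub>M N). \<bar>fst x + snd x\<bar> \<le> R1 + R2} \<in> sets (M \<Otimes>\<^sub>M N)" by measurable
  qed auto
  then show ae: "AE y in convolution M N. \<bar>y\<bar> \<le> R1 + R2"
    unfolding convolution_def by (subst AE_distr_iff[OF m]) (auto simp: split_beta')
  have "prob_space (convolution M N)" unfolding convolution_def
    using prob_space.prob_space_distr[OF pair_prob[OF M N] m] .
  then show "convolution M N \<in> cs_prob" unfolding cs_prob_iff using ae by auto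
qed

lemma integral_conv: assumes M: "M \<in> cs_prob" and N: "N \<in> cs_prob" and g: "g \<in> BC"
  shows "integral\<^sup>L (convolution M N) g = integral\<^sup>L (M \<Otimes>\<^sub>M N) (\<lambda>z. g (fst z + snd z))"
proof -
  have "integral\<^sup>L (convolution M N) g = integral\<^sup>L (M \<Otimes>\<^sub>M N) (\<lambda>z. g (case z of (x, y) \<Rightarrow> x + y))"
    unfolding convolution_def by (rule integral_distr[OF conv_meas[OF M N] BC_meas[OF g]]) simp
  then show ?thesis by (simp add: split_beta')
qed

lemma WC_conv: assumes \<rho>: "\<rho> \<in> cs_prob" and T1: "WC \<rho> T1" and T2: "WC \<rho> T2"
  shows "WC \<rho> (\<lambda>\<sigma>. convolution (T1 \<sigma>) (T2 \<sigma>))"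
  unfolding WC_def
proof (intro conjI ballI)
  fix \<sigma> assume s: "\<sigma> \<in> cs_prob"
  have a: "T1 \<sigma> \<in> cs_prob" "T2 \<sigma> \<in> cs_prob" using WC_cs T1 T2 s by auto
  then obtain R1 R2 where "AE y in T1 \<sigma>. \<bar>y\<bar> \<le> R1" "AE y in T2 \<sigma>. \<bar>y\<bar> \<le> R2"
    unfolding cs_prob_iff by blast
  then show "convolution (T1 \<sigma>) (T2 \<sigma>) \<in> cs_prob" using conv_cs(1)[OF a] by blast
next
  fix g assume g: "g \<in> BC"
  obtain B where B: "\<And>y. \<bar>g y\<bar> \<le> B" using BC_bound[OF g] by metis
  have cG: "continuous_on UNIV (\<lambda>z::real\<times>real. g (fst z + snd z))"
    using continuous_on_compose2[OF BC_cont[OF g] continuous_on_add[OF continuous_on_fst[OF continuous_on_id] continuous_on_snd[OF continuous_on_id]]]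
    by auto
  have n: "nf \<rho> (\<lambda>\<sigma>. integral\<^sup>L (T1 \<sigma> \<Otimes>\<^sub>M T2 \<sigma>) (\<lambda>z. g (fst z + snd z)))"
    using nf_pair[OF \<rho> T1 T2 cG B] .
  show "nf \<rho> (\<lambda>\<sigma>. integral\<^sup>L (convolution (T1 \<sigma>) (T2 \<sigma>)) g)"
    by (rule nf_cong[OF \<rho> _ n]) (rule integral_conv[symmetric, OF WC_cs[OF T1] WC_cs[OF T2] g])
qed

lemma ret_cs: "return borel (x::real) \<in> cs_prob" "AE y in return borel x. \<bar>y\<bar> \<le> \<bar>x\<bar>"
proof -
  show ae: "AE y in return borel x. \<bar>y\<bar> \<le> \<bar>x\<bar>" by (subst AE_return) auto
  have "prob_space (return borel x)" by (rule prob_space_return) simp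
  then show "return borel (x::real) \<in> cs_prob" unfolding cs_prob_iff using ae by auto
qed

lemma WC_pow: assumes \<rho>: "\<rho> \<in> cs_prob" shows "WC \<rho> (\<lambda>\<sigma>. conv_pow \<sigma> n)"
proof (induction n)
  case 0 then show ?case using WC_const[OF ret_cs(1)] by simp
next
  case (Suc n) then show ?case using WC_conv[OF \<rho> WC_id Suc] by simp
qed

lemma pow_cs: assumes "\<sigma> \<in> cs_prob" "AE y in \<sigma>. \<bar>y\<bar> \<le> R"
  shows "conv_pow \<sigma> n \<in> cs_prob" "AE y in conv_pow \<sigma> n. \<bar>y\<bar> \<le> real n * R"
proof (induction n)
  case 0
  { case 1 show ?case unfolding conv_pow.simps using ret_cs(1) by simp }
  { case 2 show ?case unfolding conv_pow.simps using ret_cs(2)[of 0] by simp }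
next
  case (Suc n)
  { case 1 show ?case unfolding conv_pow.simps using conv_cs(1)[OF assms(1) Suc.IH(1) assms(2) Suc.IH(2)] by simp }
  { case 2 show ?case unfolding conv_pow.simps using conv_cs(2)[OF assms(1) Suc.IH(1) assms(2) Suc.IH(2)] by (simp add: algebra_simps) }
qed

lemma mix_kern: assumes "\<And>n. Ms n \<in> cs_prob"
  shows "Ms \<in> measurable (measure_pmf p) (subprob_algebra borel)"
  using assms by (auto simp: space_subprob_algebra cs_prob_iff intro: prob_space_imp_subprob_space)

lemma mix_eq:
  assumes l: "l > 0" and Ms: "\<And>n. Ms n \<in> cs_prob"
  shows "poisson_mix l Ms = measure_pmf (poisson_pmf l) \<bind> Ms"
proof -
  let ?P = "measure_pmf (poisson_pmf l)"
  have kern: "Ms \<in> measurable ?P (subprob_algebra borel)" using mix_kern[OF Ms] .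
  have ne: "space ?P \<noteq> {}" by simp
  have sB: "sets (?P \<bind> Ms) = sets borel" using Ms unfolding cs_prob_iff by (intro sets_bind[OF _ ne]) auto
  have spB: "space (?P \<bind> Ms) = UNIV" using sets_eq_imp_space_eq[OF sB] by simp
  have em: "emeasure (?P \<bind> Ms) A = (\<Sum>n. ennreal (poisson_weight l n) * emeasure (Ms n) A)"
    if A: "A \<in> sets borel" for A
  proof -
    have "emeasure (?P \<bind> Ms) A = (\<integral>\<^sup>+n. emeasure (Ms n) A \<partial>?P)"
      using A by (intro emeasure_bind[OF ne kern]) auto
    also have "\<dots> = (\<integral>\<^sup>+n. ennreal (pmf (poisson_pmf l) n) * emeasure (Ms n) A \<partial>count_space UNIV)"
      by (rule nn_integral_measure_pmf)
    also have "\<dots> = (\<Sum>n. ennreal (pmf (poisson_pmf l) n) * emeasure (Ms n) A)"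
      by (rule nn_integral_count_space_nat)
    also have "\<dots> = (\<Sum>n. ennreal (poisson_weight l n) * emeasure (Ms n) A)"
      using l by (simp add: poisson_weight_def mult.commute)
    finally show ?thesis .
  qed
  have "poisson_mix l Ms = measure_of UNIV (sets borel) (emeasure (?P \<bind> Ms))"
    unfolding poisson_mix_def
  proof (rule measure_of_eq)
    show "sets (borel :: real measure) \<subseteq> Pow UNIV" by auto
    fix a :: "real set" assume "a \<in> sigma_sets UNIV (sets borel)"
    then have "a \<in> sets borel" using sets.sigma_sets_eq[of "borel :: real measure"] by simp
    then show "(\<Sum>n. ennreal (poisson_weight l n) * emeasure (Ms n) a) = emeasure (?P \<bind> Ms) a"
      using em by simp
  qed
  also have "\<dots> = ?P \<bind> Ms" using measure_of_of_measure[of "?P \<bind> Ms"] unfolding sB spB .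
  finally show ?thesis .
qed

lemma mix_cs:
  assumes l: "l > 0" and Ms: "\<And>n. Ms n \<in> cs_prob" and R: "\<And>n. AE y in Ms n. \<bar>y\<bar> \<le> R"
  shows "poisson_mix l Ms \<in> cs_prob"
proof -
  let ?P = "measure_pmf (poisson_pmf l)"
  have kern: "Ms \<in> measurable ?P (subprob_algebra borel)" using mix_kern[OF Ms] .
  have ne: "space ?P \<noteq> {}" by simp
  have sB: "sets (?P \<bind> Ms) = sets borel" using Ms unfolding cs_prob_iff by (intro sets_bind[OF _ ne]) auto
  have spB: "space (?P \<bind> Ms) = UNIV" using sets_eq_imp_space_eq[OF sB] by simp
  have "emeasure (?P \<bind> Ms) UNIV = (\<integral>\<^sup>+n. emeasure (Ms n) UNIV \<partial>?P)"
    by (intro emeasure_bind[OF ne kern]) auto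
  also have "\<dots> = (\<integral>\<^sup>+n. 1 \<partial>?P)"
  proof (rule nn_integral_cong)
    fix n
    have "sets (Ms n) = sets borel" "prob_space (Ms n)" using Ms[of n] cs_prob_iff by auto
    then have "space (Ms n) = UNIV" "prob_space (Ms n)" using sets_eq_imp_space_eq[of "Ms n" borel] by auto
    then show "emeasure (Ms n) UNIV = 1" using prob_space.emeasure_space_1[of "Ms n"] by simp
  qed
  also have "\<dots> = 1" by (simp add: measure_pmf.emeasure_space_1)
  finally have "prob_space (?P \<bind> Ms)" by (intro prob_spaceI) (simp add: spB)
  moreover have "AE y in ?P \<bind> Ms. \<bar>y\<bar> \<le> R"
    using R by (subst AE_bind[OF kern]) auto
  ultimately show ?thesis unfolding mix_eq[OF l Ms] cs_prob_iff using sB by blast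
qed

lemma integral_mix:
  assumes l: "l > 0" and Ms: "\<And>n. Ms n \<in> cs_prob" and g: "g \<in> BC"
  shows "integral\<^sup>L (poisson_mix l Ms) g = (\<integral>n. integral\<^sup>L (Ms n) g \<partial>measure_pmf (poisson_pmf l))"
proof -
  obtain B where B: "\<And>y. \<bar>g y\<bar> \<le> B" using BC_bound[OF g] by metis
  have "Ms \<in> measurable (measure_pmf (poisson_pmf l)) (subprob_algebra borel)" using mix_kern[OF Ms] .
  moreover have "AE x in measure_pmf (poisson_pmf l). emeasure (Ms x) (space (Ms x)) \<le> ennreal 1"
    using Ms unfolding cs_prob_iff by (auto simp: prob_space.emeasure_space_1)
  ultimately show ?thesis unfolding mix_eq[OF l Ms]
    by (intro integral_bind[of g borel B _ _ 1]) (auto simp: B BC_meas[OF g] measure_pmf.finite_measure_axioms)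
qed

lemma pmf_int: fixes f :: "nat \<Rightarrow> real" assumes "\<And>n. \<bar>f n\<bar> \<le> C" shows "integrable (measure_pmf p) f"
  by (rule measure_pmf.integrable_const_bound[where B=C]) (auto simp: assms)

lemma nf_mix:
  assumes l: "l > 0" and \<rho>: "\<rho> \<in> cs_prob" and T: "\<And>n. WC \<rho> (Ts n)" and g: "g \<in> BC"
  shows "nf \<rho> (\<lambda>\<sigma>. integral\<^sup>L (poisson_mix l (\<lambda>n. Ts n \<sigma>)) g)"
proof (rule nf_approx[OF _ \<rho>])
  fix \<eta> :: real assume \<eta>: "\<eta> > 0"
  obtain B where B: "B \<ge> 0" "\<And>y. \<bar>g y\<bar> \<le> B" using BC_bound[OF g] by metis
  let ?P = "measure_pmf (poisson_pmf l)"
  have lim: "(\<lambda>i. measure ?P {..<i}) \<longlonglongrightarrow> measure ?P (\<Union>i. {..<i::nat})"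
    by (rule measure_pmf.finite_Lim_measure_incseq) (auto simp: incseq_def)
  have U: "(\<Union>i. {..<i::nat}) = UNIV" by auto
  have m1: "measure ?P UNIV = 1" using measure_pmf.prob_space[of "poisson_pmf l"] by simp
  have "1 - \<eta> / (B + 1) < 1" using \<eta> B by simp
  then have "eventually (\<lambda>i. 1 - \<eta> / (B + 1) < measure ?P {..<i}) sequentially"
    using order_tendstoD(1)[OF lim] unfolding U m1 by blast
  then obtain N where N: "1 - \<eta> / (B + 1) < measure ?P {..<N}" using eventually_sequentially by auto
  have mc: "measure ?P (UNIV - {..<N}) = 1 - measure ?P {..<N}"
    using measure_pmf.finite_measure_compl[of "{..<N}" "poisson_pmf l"] m1 by simp
  define a' where "a' \<sigma> = (\<Sum>n\<in>{..<N}. integral\<^sup>L (Ts n \<sigma>) g * pmf (poisson_pmf l) n)" for \<sigma>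
  have na: "nf \<rho> a'" unfolding a'_def by (intro nf_sum nf_mult WC_nf[OF T g] nf_const) auto
  have main: "\<bar>integral\<^sup>L (poisson_mix l (\<lambda>n. Ts n \<sigma>)) g - a' \<sigma>\<bar> \<le> \<eta> + 0" if s: "\<sigma> \<in> cs_prob" for \<sigma>
  proof -
    define H where "H n = integral\<^sup>L (Ts n \<sigma>) g" for n
    have Ts: "Ts n \<sigma> \<in> cs_prob" for n using WC_cs[OF T s] .
    have HB: "\<bar>H n\<bar> \<le> B" for n
    proof -
      have "prob_space (Ts n \<sigma>)" "sets (Ts n \<sigma>) = sets borel" using Ts[of n] cs_prob_iff by auto
      then show ?thesis unfolding H_def using prob_int_bound BC_int[OF g] B(2) by blast
    qed
    have I1: "integral\<^sup>L (poisson_mix l (\<lambda>n. Ts n \<sigma>)) g = integral\<^sup>L ?P H"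
      unfolding H_def using integral_mix[OF l Ts g] .
    have I2: "a' \<sigma> = integral\<^sup>L ?P (\<lambda>n. H n * indicator {..<N} n)"
    proof -
      have "integral\<^sup>L ?P (\<lambda>n. H n * indicator {..<N} n) = (\<Sum>a\<in>{..<N}. H a * indicator {..<N} a * pmf (poisson_pmf l) a)"
        by (rule integral_measure_pmf_real) (auto simp: indicator_def split: if_splits)
      also have "\<dots> = a' \<sigma>" unfolding a'_def H_def by (intro sum.cong) auto
      finally show ?thesis by simp
    qed
    have iH: "integrable ?P H" using pmf_int[OF HB] .
    have iH2: "integrable ?P (\<lambda>n. H n * indicator {..<N} n)"
      using HB B(1) by (intro pmf_int[of _ B]) (auto simp: indicator_def)
    have iB: "integrable ?P (\<lambda>n. B * indicator (UNIV - {..<N}) n)"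
      using B by (intro pmf_int[of _ B]) (auto simp: indicator_def)
    have "\<bar>integral\<^sup>L ?P H - integral\<^sup>L ?P (\<lambda>n. H n * indicator {..<N} n)\<bar>
        = \<bar>integral\<^sup>L ?P (\<lambda>n. H n - H n * indicator {..<N} n)\<bar>"
      using iH iH2 by simp
    also have "\<dots> \<le> integral\<^sup>L ?P (\<lambda>n. \<bar>H n - H n * indicator {..<N} n\<bar>)"
      by (rule integral_abs_bound)
    also have "\<dots> \<le> integral\<^sup>L ?P (\<lambda>n. B * indicator (UNIV - {..<N}) n)"
      using iH iH2 iB HB by (intro integral_mono integrable_abs Bochner_Integration.integrable_diff) (auto simp: indicator_def)
    also have "\<dots> = B * measure ?P (UNIV - {..<N})" by simp
    also have "\<dots> \<le> B * (\<eta> / (B + 1))" using B(1) N mc by (intro mult_left_mono) auto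
    also have "\<dots> \<le> \<eta>" using B \<eta> by (simp add: field_simps)
    finally show ?thesis using I1 I2 by simp
  qed
  show "\<exists>a' e. nf \<rho> a' \<and> nf \<rho> e \<and> e \<rho> = 0 \<and>
      (\<forall>\<sigma>\<in>cs_prob. \<bar>integral\<^sup>L (poisson_mix l (\<lambda>n. Ts n \<sigma>)) g - a' \<sigma>\<bar> \<le> \<eta> + e \<sigma>)"
    using na main nf_const[of \<rho> 0] by (intro exI[of _ a'] exI[of _ "\<lambda>\<sigma>. 0"]) auto
qed

lemma div_bound: assumes "a \<ge> 0" "R \<ge> 0" shows "(a + real n * R) / real (n + 1) \<le> a + R"
proof -
  have "a + real n * R \<le> (a + R) * real (n + 1)" using assms by (simp add: algebra_simps)
  then show ?thesis by (simp add: divide_le_eq)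
qed

lemma Sx_cs: assumes s: "\<sigma> \<in> cs_prob" and that: "l > 0"
  shows "Sigma_x l x \<sigma> \<in> cs_prob"
proof -
  obtain R0 where "AE y in \<sigma>. \<bar>y\<bar> \<le> R0" using s unfolding cs_prob_iff by blast
  define R where "R = max R0 0"
  have R1: "AE y in \<sigma>. \<bar>y\<bar> \<le> R"
    using \<open>AE y in \<sigma>. \<bar>y\<bar> \<le> R0\<close> by (rule AE_mp) (intro AE_I2 impI, simp add: R_def)
  have R: "AE y in \<sigma>. \<bar>y\<bar> \<le> R" "R \<ge> 0" using R1 by (auto simp: R_def)
  define Ms where "Ms n = push_h (n + 1) (convolution (return borel x) (conv_pow \<sigma> n))" for n
  have c: "convolution (return borel x) (conv_pow \<sigma> n) \<in> cs_prob"
    "AE y in convolution (return borel x) (conv_pow \<sigma> n). \<bar>y\<bar> \<le> \<bar>x\<bar> + real n * R" for n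
    using conv_cs[OF ret_cs(1) pow_cs(1)[OF s R(1)] ret_cs(2) pow_cs(2)[OF s R(1)]] by auto
  have M1: "Ms n \<in> cs_prob" for n unfolding Ms_def using push_cs(1)[where k="n+1", OF c(1) _ c(2)] by simp
  have M2: "AE y in Ms n. \<bar>y\<bar> \<le> \<bar>x\<bar> + R" for n
  proof -
    have "AE y in Ms n. \<bar>y\<bar> \<le> (\<bar>x\<bar> + real n * R) / real (n + 1)"
      unfolding Ms_def using push_cs(2)[where k="n+1", OF c(1) _ c(2)] by simp
    then show ?thesis by (rule AE_mp) (intro AE_I2 impI, use div_bound[of "\<bar>x\<bar>" R n] R(2) in linarith)
  qed
  show ?thesis unfolding Sigma_x_def using mix_cs[OF that M1 M2] unfolding Ms_def .
qed

lemma So_cs: assumes s: "\<sigma> \<in> cs_prob" and that: "l > 0"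
  shows "Sigma_op l \<sigma> \<in> cs_prob"
proof -
  obtain R0 where "AE y in \<sigma>. \<bar>y\<bar> \<le> R0" using s unfolding cs_prob_iff by blast
  define R where "R = max R0 0"
  have R1: "AE y in \<sigma>. \<bar>y\<bar> \<le> R"
    using \<open>AE y in \<sigma>. \<bar>y\<bar> \<le> R0\<close> by (rule AE_mp) (intro AE_I2 impI, simp add: R_def)
  have R: "AE y in \<sigma>. \<bar>y\<bar> \<le> R" "R \<ge> 0" using R1 by (auto simp: R_def)
  define Ms where "Ms n = push_h (n + 1) (conv_pow \<sigma> (n + 1))" for n
  have M1: "Ms n \<in> cs_prob" for n unfolding Ms_def using push_cs(1)[where k="n+1", OF pow_cs(1)[OF s R(1), of "n+1"] _ pow_cs(2)[OF s R(1), of "n+1"]] by simp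
  have M2: "AE y in Ms n. \<bar>y\<bar> \<le> R" for n
  proof -
    have "AE y in Ms n. \<bar>y\<bar> \<le> real (n + 1) * R / real (n + 1)"
      unfolding Ms_def using push_cs(2)[where k="n+1", OF pow_cs(1)[OF s R(1), of "n+1"] _ pow_cs(2)[OF s R(1), of "n+1"]] by simp
    then show ?thesis by simp
  qed
  show ?thesis unfolding Sigma_op_def using mix_cs[OF that M1 M2] unfolding Ms_def .
qed

theorem theorem3:
  fixes l x :: real
  assumes "l > 0"
  shows "continuous_map vague_top vague_top (Sigma_x l x) \<and>
         continuous_map vague_top vague_top (Sigma_op l)"
proof
  show "continuous_map vague_top vague_top (Sigma_x l x)"
  proof (rule continuous_vague)
    fix \<sigma> assume "\<sigma> \<in> cs_prob" then show "Sigma_x l x \<sigma> \<in> cs_prob" using Sx_cs assms by blast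
  next
    fix \<rho> \<phi> and \<epsilon> :: real assume \<rho>: "\<rho> \<in> cs_prob" and \<phi>: "\<phi> \<in> Cc" and \<epsilon>: "\<epsilon> > 0"
    have T: "WC \<rho> (\<lambda>\<sigma>. push_h (n + 1) (convolution (return borel x) (conv_pow \<sigma> n)))" for n
      using WC_push[where k="n+1", OF WC_conv[OF \<rho> WC_const[OF ret_cs(1)[of x]] WC_pow[OF \<rho>, of n]] _ \<rho>] by simp
    have \<phi>B: "\<phi> \<in> BC" using \<phi> Cc_BC by blast
    have "nf \<rho> (\<lambda>\<sigma>. integral\<^sup>L (Sigma_x l x \<sigma>) \<phi>)"
      unfolding Sigma_x_def by (rule nf_mix[OF assms \<rho> T \<phi>B])
    then show "okC Cc \<rho> {\<sigma>. \<bar>integral\<^sup>L (Sigma_x l x \<sigma>) \<phi> - integral\<^sup>L (Sigma_x l x \<rho>) \<phi>\<bar> < \<epsilon>}"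
      using \<epsilon> by (intro okC_trans[OF nfD \<rho>])
  qed
next
  show "continuous_map vague_top vague_top (Sigma_op l)"
  proof (rule continuous_vague)
    fix \<sigma> assume "\<sigma> \<in> cs_prob" then show "Sigma_op l \<sigma> \<in> cs_prob" using So_cs assms by blast
  next
    fix \<rho> \<phi> and \<epsilon> :: real assume \<rho>: "\<rho> \<in> cs_prob" and \<phi>: "\<phi> \<in> Cc" and \<epsilon>: "\<epsilon> > 0"
    have T: "WC \<rho> (\<lambda>\<sigma>. push_h (n + 1) (conv_pow \<sigma> (n + 1)))" for n
      using WC_push[where k="n+1", OF WC_pow[OF \<rho>, of "n+1"] _ \<rho>] by simp
    have \<phi>B: "\<phi> \<in> BC" using \<phi> Cc_BC by blast
    have "nf \<rho> (\<lambda>\<sigma>. integral\<^sup>L (Sigma_op l \<sigma>) \<phi>)"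
      unfolding Sigma_op_def by (rule nf_mix[OF assms \<rho> T \<phi>B])
    then show "okC Cc \<rho> {\<sigma>. \<bar>integral\<^sup>L (Sigma_op l \<sigma>) \<phi> - integral\<^sup>L (Sigma_op l \<rho>) \<phi>\<bar> < \<epsilon>}"
      using \<epsilon> by (intro okC_trans[OF nfD \<rho>])
  qed
qed

end
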